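(* Let $\lambda\in\mathbb{R}$. For every $\mu,\nu\in{\mathcal M}({\mathcal T})$, $\mathrm{ET}_{c,\lambda}(\mu,\nu)=\mathrm{KT}(\hat\mu,\hat\nu)$. Moreover, the relation $$\hat\gamma=\gamma+[(1-f_1)\mu]\otimes\delta_{\hat s}+\delta_{\hat s}\otimes[(1-f_2)\nu]+\gamma({\mathcal T}\times{\mathcal T})\,\delta_{(\hat s,\hat s)}$$ (where $\gamma_1=f_1\mu$, $\gamma_2=f_2\nu$) gives a one-to-one correspondence between optimal solutions $\gamma$ of the problem defining $\mathrm{ET}_{c,\lambda}(\mu,\nu)$ and optimal solutions $\hat\gamma$ of the problem defining $\mathrm{KT}(\hat\mu,\hat\nu)$.
   Context: Let ${\mathcal T}$ be a tree (identified with the set of its nodes and all points on its edges), ${\mathcal M}({\mathcal T})$ the set of nonnegative Borel measures on ${\mathcal T}$ with finite mass. Fix $b\ge0$, a continuous cost $c:{\mathcal T}\times{\mathcal T}\to\mathbb{R}$ with $c(x,x)=0$, and weights $w_1,w_2:{\mathcal T}\to[0,\infty)$. For $\mu,\nu\in{\mathcal M}({\mathcal T})$, $\Pi_{\le}(\mu,\nu)$ is the set of nonnegative finite Borel measures $\gamma$ on ${\mathcal T}\times{\mathcal T}$ with marginals $\gamma_1\le\mu$, $\gamma_2\le\nu$, and $f_1,f_2$ denote the densities $\gamma_1=f_1\mu$, $\gamma_2=f_2\nu$. Define $\mathrm{ET}_{c,\lambda}(\mu,\nu):=\inf_{\gamma\in\Pi_\le(\mu,\nu)}\Big[\int_{\mathcal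 T} w_1[1-f_1]\,d\mu+\int_{\mathcal T} w_2[1-f_2]\,d\nu+b\int_{{\mathcal T}\times{\mathcal T}}[c(x,y)-\lambda]\,\gamma(dx,dy)\Big]$. Let $\hat s\notin{\mathcal T}$, $\hat{\mathcal T}:={\mathcal T}\cup\{\hat s\}$, $\hat\mu:=\mu+\nu({\mathcal T})\delta_{\hat s}$, $\hat\nu:=\nu+\mu({\mathcal T})\delta_{\hat s}$, and define $\hat c$ on $\hat{\mathcal T}\times\hat{\mathcal T}$ by $\hat c(x,y)=b[c(x,y)-\lambda]$ for $x,y\in{\mathcal T}$, $\hat c(x,\hat s)=w_1(x)$ for $x\in{\mathcal T}$, $\hat c(\hat s,y)=w_2(y)$ for $y\in{\mathcal T}$, $\hat c(\hat s,\hat s)=0$. Let $\Gamma(\hat\mu,\hat\nu)$ be the set of nonnegative Borel measures on $\hat{\mathcal T}\times\hat{\mathcal T}$ with marginals $\hat\mu$ and $\hat\nu$, and $\mathrm{KT}(\hat\mu,\hat\nu):=\inf_{\hat\gamma\in\Gamma(\hat\mu,\hat\nu)}\int_{\hat{\mathcal T}\times\hat{\mathcal T}}\hat c\,d\hat\gamma$. *)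

theory Defs
  imports "HOL-Analysis.Analysis" "HOL-Probability.Probability"
begin

text \<open>A (metric) tree: a compact, path-connected set in which any two arcs with the
  same endpoints have the same image (uniquely arcwise connected continuum).
  Every finite metric tree (nodes plus the points on its edges) is of this kind.\<close>
definition is_tree :: "'a::metric_space set \<Rightarrow> bool" where
  "is_tree T \<longleftrightarrow> compact T \<and> path_connected T \<and>
     (\<forall>g h. arc g \<and> arc h \<and> path_image g \<subseteq> T \<and> path_image h \<subseteq> T \<and>
        pathstart g = pathstart h \<and> pathfinish g = pathfinish h \<longrightarrow> path_image g = path_image h)"

definition fin_measures :: "'a::topological_space set \<Rightarrow> 'a measure set" where
  "fin_measures T = {\<mu>. sets \<mu> = sets (restrict_space borel T) \<and> finite_measure \<mu>}"

definition ext_integral :: "'a measure \<Rightarrow> ('a \<Rightarrow> real) \<Rightarrow> ereal" where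
  "ext_integral M f = enn2ereal (\<integral>\<^sup>+ z. ennreal (f z) \<partial>M) - enn2ereal (\<integral>\<^sup>+ z. ennreal (- f z) \<partial>M)"

definition marg1 :: "'a::topological_space set \<Rightarrow> ('a \<times> 'a) measure \<Rightarrow> 'a measure" where
  "marg1 T \<gamma> = distr \<gamma> (restrict_space borel T) fst"
definition marg2 :: "'a::topological_space set \<Rightarrow> ('a \<times> 'a) measure \<Rightarrow> 'a measure" where
  "marg2 T \<gamma> = distr \<gamma> (restrict_space borel T) snd"

definition sub_plans :: "'a::topological_space set \<Rightarrow> 'a measure \<Rightarrow> 'a measure \<Rightarrow> ('a \<times> 'a) measure set" where
  "sub_plans T \<mu> \<nu> = {\<gamma>. sets \<gamma> = sets (restrict_space borel (T \<times> T)) \<and> finite_measure \<gamma> \<and>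
      (\<forall>A\<in>sets (restrict_space borel T). emeasure (marg1 T \<gamma>) A \<le> emeasure \<mu> A) \<and>
      (\<forall>A\<in>sets (restrict_space borel T). emeasure (marg2 T \<gamma>) A \<le> emeasure \<nu> A)}"

text \<open>Objective of the extended (unbalanced) transport problem; the densities
  \<open>f\<^sub>1, f\<^sub>2\<close> of \<open>\<gamma>\<^sub>1 \<le> \<mu>, \<gamma>\<^sub>2 \<le> \<nu>\<close> are the Radon-Nikodym derivatives.\<close>
definition ET_cost :: "real \<Rightarrow> ('a \<Rightarrow> 'a \<Rightarrow> real) \<Rightarrow> real \<Rightarrow> ('a \<Rightarrow> real) \<Rightarrow> ('a \<Rightarrow> real) \<Rightarrow>
    'a::topological_space set \<Rightarrow> 'a measure \<Rightarrow> 'a measure \<Rightarrow> ('a \<times> 'a) measure \<Rightarrow> ereal" where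
  "ET_cost b c lam w1 w2 T \<mu> \<nu> \<gamma> =
     enn2ereal (\<integral>\<^sup>+ x. ennreal (w1 x) * (1 - RN_deriv \<mu> (marg1 T \<gamma>) x) \<partial>\<mu>)
   + enn2ereal (\<integral>\<^sup>+ y. ennreal (w2 y) * (1 - RN_deriv \<nu> (marg2 T \<gamma>) y) \<partial>\<nu>)
   + ereal b * ext_integral \<gamma> (\<lambda>z. c (fst z) (snd z) - lam)"

definition ET :: "real \<Rightarrow> ('a \<Rightarrow> 'a \<Rightarrow> real) \<Rightarrow> real \<Rightarrow> ('a \<Rightarrow> real) \<Rightarrow> ('a \<Rightarrow> real) \<Rightarrow>
    'a::topological_space set \<Rightarrow> 'a measure \<Rightarrow> 'a measure \<Rightarrow> ereal" where
  "ET b c lam w1 w2 T \<mu> \<nu> = (INF \<gamma>\<in>sub_plans T \<mu> \<nu>. ET_cost b c lam w1 w2 T \<mu> \<nu> \<gamma>)"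

text \<open>The extended space \<open>T\<^sup>^ = T \<union> {s}\<close> (with \<open>s \<notin> T\<close>, a point of the ambient type), and
  the extended measures \<open>\<mu>\<^sup>^ = \<mu> + \<nu>(T) \<delta>\<^sub>s\<close>, \<open>\<nu>\<^sup>^ = \<nu> + \<mu>(T) \<delta>\<^sub>s\<close>.\<close>
definition hat_meas :: "'a::topological_space set \<Rightarrow> 'a \<Rightarrow> 'a measure \<Rightarrow> 'a measure \<Rightarrow> 'a measure" where
  "hat_meas T s \<mu> \<nu> = measure_of (insert s T) (sets (restrict_space borel (insert s T)))
     (\<lambda>A. emeasure \<mu> (A \<inter> T) + emeasure \<nu> T * indicator A s)"

definition hat_c :: "real \<Rightarrow> ('a \<Rightarrow> 'a \<Rightarrow> real) \<Rightarrow> real \<Rightarrow> ('a \<Rightarrow> real) \<Rightarrow> ('a \<Rightarrow> real) \<Rightarrow> 'a \<Rightarrow> 'a \<Rightarrow> 'a \<Rightarrow> real" where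
  "hat_c b c lam w1 w2 s x y =
     (if x = s \<and> y = s then 0 else if y = s then w1 x else if x = s then w2 y else b * (c x y - lam))"

definition couplings :: "'a::topological_space set \<Rightarrow> 'a measure \<Rightarrow> 'a measure \<Rightarrow> ('a \<times> 'a) measure set" where
  "couplings S m n = {g. sets g = sets (restrict_space borel (S \<times> S)) \<and>
      distr g (restrict_space borel S) fst = m \<and> distr g (restrict_space borel S) snd = n}"

definition KT_cost :: "real \<Rightarrow> ('a \<Rightarrow> 'a \<Rightarrow> real) \<Rightarrow> real \<Rightarrow> ('a \<Rightarrow> real) \<Rightarrow> ('a \<Rightarrow> real) \<Rightarrow> 'a \<Rightarrow>
    ('a \<times> 'a) measure \<Rightarrow> ereal" where
  "KT_cost b c lam w1 w2 s g = ext_integral g (\<lambda>z. hat_c b c lam w1 w2 s (fst z) (snd z))"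

definition KT :: "real \<Rightarrow> ('a \<Rightarrow> 'a \<Rightarrow> real) \<Rightarrow> real \<Rightarrow> ('a \<Rightarrow> real) \<Rightarrow> ('a \<Rightarrow> real) \<Rightarrow>
    'a::topological_space set \<Rightarrow> 'a \<Rightarrow> 'a measure \<Rightarrow> 'a measure \<Rightarrow> ereal" where
  "KT b c lam w1 w2 T s \<mu> \<nu> = (INF g\<in>couplings (insert s T) (hat_meas T s \<mu> \<nu>) (hat_meas T s \<nu> \<mu>).
      KT_cost b c lam w1 w2 s g)"

definition ET_optimal where
  "ET_optimal b c lam w1 w2 T \<mu> \<nu> =
     {\<gamma>\<in>sub_plans T \<mu> \<nu>. ET_cost b c lam w1 w2 T \<mu> \<nu> \<gamma> = ET b c lam w1 w2 T \<mu> \<nu>}"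

definition KT_optimal where
  "KT_optimal b c lam w1 w2 T s \<mu> \<nu> =
     {g\<in>couplings (insert s T) (hat_meas T s \<mu> \<nu>) (hat_meas T s \<nu> \<mu>).
        KT_cost b c lam w1 w2 s g = KT b c lam w1 w2 T s \<mu> \<nu>}"

text \<open>The map \<open>\<gamma> \<mapsto> \<gamma> + [(1-f\<^sub>1)\<mu>]\<otimes>\<delta>\<^sub>s + \<delta>\<^sub>s\<otimes>[(1-f\<^sub>2)\<nu>] + \<gamma>(T\<times>T) \<delta>\<^sub>(\<^sub>s\<^sub>,\<^sub>s\<^sub>)\<close>.\<close>
definition hat_plan :: "'a::topological_space set \<Rightarrow> 'a \<Rightarrow> 'a measure \<Rightarrow> 'a measure \<Rightarrow>
    ('a \<times> 'a) measure \<Rightarrow> ('a \<times> 'a) measure" where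
  "hat_plan T s \<mu> \<nu> \<gamma> = measure_of (insert s T \<times> insert s T)
     (sets (restrict_space borel (insert s T \<times> insert s T)))
     (\<lambda>A. emeasure \<gamma> (A \<inter> (T \<times> T))
        + (\<integral>\<^sup>+ x. (1 - RN_deriv \<mu> (marg1 T \<gamma>) x) * indicator A (x, s) \<partial>\<mu>)
        + (\<integral>\<^sup>+ y. (1 - RN_deriv \<nu> (marg2 T \<gamma>) y) * indicator A (s, y) \<partial>\<nu>)
        + emeasure \<gamma> (T \<times> T) * indicator A (s, s))"

end

theory Submission
  imports Defs
begin

lemma dens_le_one_AE:
  fixes f :: "'a \<Rightarrow> ennreal"
  assumes f[measurable]: "f \<in> borel_measurable M" and fin: "emeasure M (space M) \<noteq> \<infinity>"
    and le: "\<And>A. A \<in> sets M \<Longrightarrow> (\<integral>\<^sup>+x. f x * indicator A x \<partial>M) \<le> emeasure M A"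
  shows "AE x in M. f x \<le> 1"
proof -
  let ?N = "{x\<in>space M. 1 < f x}"
  have N[measurable]: "?N \<in> sets M" by measurable
  have finN: "emeasure M ?N \<noteq> \<infinity>"
    using fin emeasure_mono[OF sets.sets_into_space[OF N] sets.top] by (auto simp: top_unique)
  have "(\<integral>\<^sup>+x. (f x - 1) * indicator ?N x \<partial>M) = (\<integral>\<^sup>+x. f x * indicator ?N x - indicator ?N x \<partial>M)"
    by (auto intro!: nn_integral_cong simp: indicator_def)
  also have "\<dots> = (\<integral>\<^sup>+x. f x * indicator ?N x \<partial>M) - (\<integral>\<^sup>+x. indicator ?N x \<partial>M)"
  proof (rule nn_integral_diff)
    show "AE x in M. indicator ?N x \<le> f x * indicator ?N x"
      by (auto split: split_indicator)
    show "integral\<^sup>N M (indicator ?N) \<noteq> \<infinity>" using finN by simp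
  qed auto
  also have "\<dots> = 0"
  proof (rule diff_eq_0_ennreal)
    show "set_nn_integral M ?N f \<le> integral\<^sup>N M (indicator ?N)" using le[OF N] by simp
    then show "set_nn_integral M ?N f < top" using finN
      by (metis infinity_ennreal_def le_less_trans less_top nn_integral_indicator N)
  qed
  finally have "AE x in M. (f x - 1) * indicator ?N x = 0"
    by (subst (asm) nn_integral_0_iff_AE) auto
  with AE_space show ?thesis
    by eventually_elim (auto simp: indicator_def not_less ennreal_minus_eq_0 split: if_splits)
qed

lemma dens_facts:
  assumes fm: "finite_measure M" and sN: "sets N = sets M"
    and le: "\<And>A. A \<in> sets M \<Longrightarrow> emeasure N A \<le> emeasure M A"
  shows "density M (RN_deriv M N) = N" "RN_deriv M N \<in> borel_measurable M"
    "AE x in M. RN_deriv M N x \<le> 1"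
proof -
  interpret finite_measure M by fact
  have ac: "absolutely_continuous M N"
    unfolding absolutely_continuous_def
  proof
    fix A assume "A \<in> null_sets M"
    then show "A \<in> null_sets N" using le[of A] sN by (auto simp: null_sets_def)
  qed
  show d: "density M (RN_deriv M N) = N" by (rule density_RN_deriv[OF ac sN])
  show m: "RN_deriv M N \<in> borel_measurable M" by simp
  show "AE x in M. RN_deriv M N x \<le> 1"
  proof (rule dens_le_one_AE[OF m])
    show "emeasure M (space M) \<noteq> \<infinity>" by simp
    fix A assume A: "A \<in> sets M"
    have "(\<integral>\<^sup>+x. RN_deriv M N x * indicator A x \<partial>M) = emeasure (density M (RN_deriv M N)) A"
      using A by (simp add: emeasure_density)
    also have "\<dots> = emeasure N A" using d by simp
    finally show "(\<integral>\<^sup>+x. RN_deriv M N x * indicator A x \<partial>M) \<le> emeasure M A" using le[OF A] by simp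
  qed
qed


lemma summable_enn[simp]: "summable (f :: nat \<Rightarrow> ennreal)"
  by (rule summableI)

locale ptset =
  fixes T :: "'a::{metric_space, second_countable_topology} set" and s :: 'a and \<mu> \<nu> :: "'a measure"
  assumes cT: "compact T" and sT: "s \<notin> T" and \<mu>: "\<mu> \<in> fin_measures T" and \<nu>: "\<nu> \<in> fin_measures T"

context ptset
begin

lemma T_borel[measurable]: "T \<in> sets borel"
  using cT by (simp add: borel_closed compact_imp_closed)
lemma S_borel[measurable]: "insert s T \<in> sets borel"
  using cT by (simp add: borel_closed compact_imp_closed)
lemma TT_borel[measurable]: "T \<times> T \<in> sets borel"
  using cT by (simp add: borel_closed compact_imp_closed closed_Times)
lemma SS_borel[measurable]: "insert s T \<times> insert s T \<in> sets borel"
  using cT by (simp add: borel_closed compact_imp_closed closed_Times)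

lemma space_MT[simp]: "space (restrict_space borel T) = T" by simp
lemma space_MS[simp]: "space (restrict_space borel (insert s T)) = insert s T"
  using S_borel by (rule space_restrict_space2)
lemma space_MTT[simp]: "space (restrict_space borel (T \<times> T)) = T \<times> T" by simp
lemma space_MSS[simp]: "space (restrict_space borel (insert s T \<times> insert s T)) = insert s T \<times> insert s T"
  using SS_borel by (rule space_restrict_space2)

lemma sets_mu: "sets \<mu> = sets (restrict_space borel T)" and space_mu[simp]: "space \<mu> = T"
  and fin_mu: "finite_measure \<mu>"
  using \<mu> by (auto simp: fin_measures_def dest: sets_eq_imp_space_eq)
lemma sets_nu: "sets \<nu> = sets (restrict_space borel T)" and space_nu[simp]: "space \<nu> = T"
  and fin_nu: "finite_measure \<nu>"
  using \<nu> by (auto simp: fin_measures_def dest: sets_eq_imp_space_eq)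

lemma mu_fin[simp]: "emeasure \<mu> A \<noteq> \<infinity>"
  using fin_mu finite_measure.emeasure_finite by auto
lemma nu_fin[simp]: "emeasure \<nu> A \<noteq> \<infinity>"
  using fin_nu finite_measure.emeasure_finite by auto

lemma meas_left: "(\<lambda>x. (x, s)) \<in> measurable (restrict_space borel T) (restrict_space borel (insert s T \<times> insert s T))"
  by (intro measurable_restrict_space1 measurable_restrict_space2)
     (auto intro!: borel_measurable_continuous_onI continuous_intros)
lemma meas_right: "(\<lambda>y. (s, y)) \<in> measurable (restrict_space borel T) (restrict_space borel (insert s T \<times> insert s T))"
  by (intro measurable_restrict_space1 measurable_restrict_space2)
     (auto intro!: borel_measurable_continuous_onI continuous_intros)
lemma meas_fst: "fst \<in> measurable (restrict_space borel (T \<times> T)) (restrict_space borel T)"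
  by (intro measurable_restrict_space1 measurable_restrict_space2)
     (auto intro!: borel_measurable_continuous_onI continuous_intros)
lemma meas_snd: "snd \<in> measurable (restrict_space borel (T \<times> T)) (restrict_space borel T)"
  by (intro measurable_restrict_space1 measurable_restrict_space2)
     (auto intro!: borel_measurable_continuous_onI continuous_intros)

lemma sets_MSS_TT: "A \<in> sets (restrict_space borel (insert s T \<times> insert s T)) \<Longrightarrow>
   A \<inter> (T \<times> T) \<in> sets (restrict_space borel (T \<times> T))"
  unfolding sets_restrict_space by auto

lemma sub_plans_D:
  assumes "\<gamma> \<in> sub_plans T \<mu> \<nu>"
  shows "sets \<gamma> = sets (restrict_space borel (T \<times> T))" "space \<gamma> = T \<times> T" "finite_measure \<gamma>"
    "\<And>A. emeasure \<gamma> A \<noteq> \<infinity>"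
proof -
  show s: "sets \<gamma> = sets (restrict_space borel (T \<times> T))" and f: "finite_measure \<gamma>"
    using assms unfolding sub_plans_def by blast+
  show "space \<gamma> = T \<times> T" using sets_eq_imp_space_eq[OF s] by simp
  show "\<And>A. emeasure \<gamma> A \<noteq> \<infinity>" using finite_measure.emeasure_finite[OF f] by simp
qed

lemma marg1_eq: assumes "\<gamma> \<in> sub_plans T \<mu> \<nu>" "A \<in> sets (restrict_space borel T)"
  shows "emeasure (marg1 T \<gamma>) A = emeasure \<gamma> (A \<times> T)"
proof -
  have m: "fst \<in> measurable \<gamma> (restrict_space borel T)"
    unfolding measurable_cong_sets[OF sub_plans_D(1)[OF assms(1)] refl] by (rule meas_fst)
  have "A \<subseteq> T" using sets.sets_into_space[OF assms(2)] by simp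
  then have "fst -` A \<inter> space \<gamma> = A \<times> T" using sub_plans_D(2)[OF assms(1)] by auto
  then show ?thesis unfolding marg1_def using m assms(2) by (simp add: emeasure_distr)
qed

lemma marg2_eq: assumes "\<gamma> \<in> sub_plans T \<mu> \<nu>" "A \<in> sets (restrict_space borel T)"
  shows "emeasure (marg2 T \<gamma>) A = emeasure \<gamma> (T \<times> A)"
proof -
  have m: "snd \<in> measurable \<gamma> (restrict_space borel T)"
    unfolding measurable_cong_sets[OF sub_plans_D(1)[OF assms(1)] refl] by (rule meas_snd)
  have "A \<subseteq> T" using sets.sets_into_space[OF assms(2)] by simp
  then have "snd -` A \<inter> space \<gamma> = T \<times> A" using sub_plans_D(2)[OF assms(1)] by auto
  then show ?thesis unfolding marg2_def using m assms(2) by (simp add: emeasure_distr)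
qed

lemma sub_plans_le:
  assumes "\<gamma> \<in> sub_plans T \<mu> \<nu>"
  shows "\<And>A. A \<in> sets \<mu> \<Longrightarrow> emeasure (marg1 T \<gamma>) A \<le> emeasure \<mu> A"
    "\<And>A. A \<in> sets \<nu> \<Longrightarrow> emeasure (marg2 T \<gamma>) A \<le> emeasure \<nu> A"
  using assms unfolding sub_plans_def sets_mu sets_nu by blast+

lemma sets_marg1: "sets (marg1 T \<gamma>) = sets \<mu>" unfolding marg1_def sets_mu by simp
lemma sets_marg2: "sets (marg2 T \<gamma>) = sets \<nu>" unfolding marg2_def sets_nu by simp

lemma marg1_facts: assumes "\<gamma> \<in> sub_plans T \<mu> \<nu>"
  shows "density \<mu> (RN_deriv \<mu> (marg1 T \<gamma>)) = marg1 T \<gamma>"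
    "RN_deriv \<mu> (marg1 T \<gamma>) \<in> borel_measurable \<mu>"
    "AE x in \<mu>. RN_deriv \<mu> (marg1 T \<gamma>) x \<le> 1"
  using dens_facts[OF fin_mu sets_marg1 sub_plans_le(1)[OF assms]] by blast+

lemma marg2_facts: assumes "\<gamma> \<in> sub_plans T \<mu> \<nu>"
  shows "density \<nu> (RN_deriv \<nu> (marg2 T \<gamma>)) = marg2 T \<gamma>"
    "RN_deriv \<nu> (marg2 T \<gamma>) \<in> borel_measurable \<nu>"
    "AE x in \<nu>. RN_deriv \<nu> (marg2 T \<gamma>) x \<le> 1"
  using dens_facts[OF fin_nu sets_marg2 sub_plans_le(2)[OF assms]] by blast+

lemma compl_gen:
  assumes fm: "finite_measure M" and d: "density M f = N" and fm_[measurable]: "f \<in> borel_measurable M"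
    and le: "AE x in M. f x \<le> 1" and A[measurable]: "A \<in> sets M"
  shows "(\<integral>\<^sup>+x. (1 - f x) * indicator A x \<partial>M) + emeasure N A = emeasure M A"
proof -
  interpret finite_measure M by fact
  have NA: "emeasure N A = (\<integral>\<^sup>+x. f x * indicator A x \<partial>M)"
    using d[symmetric] A by (simp add: emeasure_density)
  have le1: "(\<integral>\<^sup>+x. f x * indicator A x \<partial>M) \<le> emeasure M A"
  proof -
    have "(\<integral>\<^sup>+x. f x * indicator A x \<partial>M) \<le> (\<integral>\<^sup>+x. indicator A x \<partial>M)"
      using le by (intro nn_integral_mono_AE) (auto split: split_indicator)
    then show ?thesis using A by simp
  qed
  have fin: "(\<integral>\<^sup>+x. f x * indicator A x \<partial>M) \<noteq> \<infinity>"
    using le1 emeasure_finite[of A] by (auto simp: top_unique)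
  have "(\<integral>\<^sup>+x. (1 - f x) * indicator A x \<partial>M) = (\<integral>\<^sup>+x. indicator A x - f x * indicator A x \<partial>M)"
    by (intro nn_integral_cong) (auto split: split_indicator)
  also have "\<dots> = (\<integral>\<^sup>+x. indicator A x \<partial>M) - (\<integral>\<^sup>+x. f x * indicator A x \<partial>M)"
    using le fin by (intro nn_integral_diff) (auto split: split_indicator)
  finally show ?thesis using NA fin A
    by (simp add: diff_add_cancel_ennreal[OF le1])
qed

end

context ptset
begin

lemma meas_left_mu: "(\<lambda>x. (x, s)) \<in> measurable \<mu> (restrict_space borel (insert s T \<times> insert s T))"
  unfolding measurable_cong_sets[OF sets_mu refl] by (rule meas_left)
lemma meas_right_nu: "(\<lambda>y. (s, y)) \<in> measurable \<nu> (restrict_space borel (insert s T \<times> insert s T))"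
  unfolding measurable_cong_sets[OF sets_nu refl] by (rule meas_right)

abbreviation "F \<gamma> A \<equiv> emeasure \<gamma> (A \<inter> (T \<times> T))
        + (\<integral>\<^sup>+ x. (1 - RN_deriv \<mu> (marg1 T \<gamma>) x) * indicator A (x, s) \<partial>\<mu>)
        + (\<integral>\<^sup>+ y. (1 - RN_deriv \<nu> (marg2 T \<gamma>) y) * indicator A (s, y) \<partial>\<nu>)
        + emeasure \<gamma> (T \<times> T) * indicator A (s, s)"

lemma sets_hat: "sets (hat_plan T s \<mu> \<nu> \<gamma>) = sets (restrict_space borel (insert s T \<times> insert s T))"
proof -
  let ?M = "restrict_space borel (insert s T \<times> insert s T)"
  have sub: "sets ?M \<subseteq> Pow (insert s T \<times> insert s T)"
    using sets.space_closed[of ?M] unfolding space_MSS .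
  have "sets (hat_plan T s \<mu> \<nu> \<gamma>) = sigma_sets (insert s T \<times> insert s T) (sets ?M)"
    unfolding hat_plan_def by (rule sets_measure_of[OF sub])
  also have "\<dots> = sets ?M" using sets.sigma_sets_eq[of ?M] unfolding space_MSS .
  finally show ?thesis .
qed

lemma space_hat: "space (hat_plan T s \<mu> \<nu> \<gamma>) = insert s T \<times> insert s T"
  using sets_eq_imp_space_eq[OF sets_hat] space_MSS by simp

lemma hat_emeasure:
  assumes g: "\<gamma> \<in> sub_plans T \<mu> \<nu>" and A: "A \<in> sets (restrict_space borel (insert s T \<times> insert s T))"
  shows "emeasure (hat_plan T s \<mu> \<nu> \<gamma>) A = F \<gamma> A"
  unfolding hat_plan_def
proof (rule emeasure_measure_of_sigma[OF _ _ _ A])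
  let ?M = "restrict_space borel (insert s T \<times> insert s T)"
  show "sigma_algebra (insert s T \<times> insert s T) (sets ?M)"
    using sets.sigma_algebra_axioms[of ?M] space_MSS by simp
  show "positive (sets ?M) (F \<gamma>)" by (simp add: positive_def)
  note f1 = marg1_facts[OF g] and f2 = marg2_facts[OF g]
  note [measurable] = f1(2) f2(2)
  have ml[measurable]: "(\<lambda>x. indicator B (x, s) :: ennreal) \<in> borel_measurable \<mu>" if "B \<in> sets ?M" for B
    using measurable_compose[OF meas_left_mu borel_measurable_indicator[OF that]] by simp
  have mr[measurable]: "(\<lambda>x. indicator B (s, x) :: ennreal) \<in> borel_measurable \<nu>" if "B \<in> sets ?M" for B
    using measurable_compose[OF meas_right_nu borel_measurable_indicator[OF that]] by simp
  show "countably_additive (sets ?M) (F \<gamma>)"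
    unfolding countably_additive_def
  proof (intro allI impI)
    fix B :: "nat \<Rightarrow> _" assume B: "range B \<subseteq> sets ?M" "disjoint_family B" "\<Union> (range B) \<in> sets ?M"
    have Bi: "B i \<in> sets ?M" for i using B(1) by auto
    have a: "(\<Sum>i. emeasure \<gamma> (B i \<inter> (T \<times> T))) = emeasure \<gamma> ((\<Union> (range B)) \<inter> (T \<times> T))"
    proof -
      have "(\<Sum>i. emeasure \<gamma> (B i \<inter> (T \<times> T))) = emeasure \<gamma> (\<Union>i. B i \<inter> (T \<times> T))"
      proof (rule suminf_emeasure)
        show "range (\<lambda>i. B i \<inter> T \<times> T) \<subseteq> sets \<gamma>"
          using sets_MSS_TT[OF Bi] sub_plans_D(1)[OF g] by auto
        show "disjoint_family (\<lambda>i. B i \<inter> T \<times> T)"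
          using B(2) by (auto simp: disjoint_family_on_def)
      qed
      then show ?thesis by simp
    qed
    have m1: "(\<lambda>x. (1 - RN_deriv \<mu> (marg1 T \<gamma>) x) * indicator (B i) (x, s)) \<in> borel_measurable \<mu>" for i
    proof -
      note [measurable] = ml[OF Bi]
      show ?thesis by measurable
    qed
    have m2: "(\<lambda>x. (1 - RN_deriv \<nu> (marg2 T \<gamma>) x) * indicator (B i) (s, x)) \<in> borel_measurable \<nu>" for i
    proof -
      note [measurable] = mr[OF Bi]
      show ?thesis by measurable
    qed
    have b: "(\<Sum>i. \<integral>\<^sup>+ x. (1 - RN_deriv \<mu> (marg1 T \<gamma>) x) * indicator (B i) (x, s) \<partial>\<mu>)
       = (\<integral>\<^sup>+ x. (1 - RN_deriv \<mu> (marg1 T \<gamma>) x) * indicator (\<Union> (range B)) (x, s) \<partial>\<mu>)"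
      using B(2)
      by (subst nn_integral_suminf[symmetric, OF m1]) (auto simp: suminf_indicator)
    have c: "(\<Sum>i. \<integral>\<^sup>+ y. (1 - RN_deriv \<nu> (marg2 T \<gamma>) y) * indicator (B i) (s, y) \<partial>\<nu>)
       = (\<integral>\<^sup>+ y. (1 - RN_deriv \<nu> (marg2 T \<gamma>) y) * indicator (\<Union> (range B)) (s, y) \<partial>\<nu>)"
      using B(2)
      by (subst nn_integral_suminf[symmetric, OF m2]) (auto simp: suminf_indicator)
    have d: "(\<Sum>i. emeasure \<gamma> (T \<times> T) * indicator (B i) (s, s)) = emeasure \<gamma> (T \<times> T) * indicator (\<Union> (range B)) (s, s)"
      using suminf_indicator[OF B(2)] by simp
    show "(\<Sum>i. F \<gamma> (B i)) = F \<gamma> (\<Union> (range B))"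
      by (simp only: suminf_add[symmetric, OF summable_enn summable_enn] a b c d)
  qed
qed

end

lemma SUP_add4:
  fixes a b c d :: "nat \<Rightarrow> ennreal"
  assumes "incseq a" "incseq b" "incseq c" "incseq d"
  shows "(SUP i. a i + b i + c i + d i) = (SUP i. a i) + (SUP i. b i) + (SUP i. c i) + (SUP i. d i)"
proof -
  have i1: "incseq (\<lambda>i. a i + b i)" using assms by (auto simp: incseq_def intro: add_mono)
  have i2: "incseq (\<lambda>i. a i + b i + c i)" using assms by (auto simp: incseq_def intro!: add_mono)
  have "(SUP i. a i + b i + c i + d i) = (SUP i. a i + b i + c i) + (SUP i. d i)"
    by (rule ennreal_SUP_add[OF i2 assms(4)])
  also have "(SUP i. a i + b i + c i) = (SUP i. a i + b i) + (SUP i. c i)"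
    by (rule ennreal_SUP_add[OF i1 assms(3)])
  also have "(SUP i. a i + b i) = (SUP i. a i) + (SUP i. b i)"
    by (rule ennreal_SUP_add[OF assms(1,2)])
  finally show ?thesis .
qed

context ptset
begin

lemma meas_transfer:
  assumes g: "\<gamma> \<in> sub_plans T \<mu> \<nu>" and u: "u \<in> borel_measurable (restrict_space borel (insert s T \<times> insert s T))"
  shows "u \<in> borel_measurable \<gamma>" "(\<lambda>x. u (x, s)) \<in> borel_measurable \<mu>" "(\<lambda>y. u (s, y)) \<in> borel_measurable \<nu>"
proof -
  have "restrict_space (restrict_space borel (insert s T \<times> insert s T)) (T \<times> T) = restrict_space borel (T \<times> T)"
    using SS_borel TT_borel by (subst restrict_restrict_space) (auto intro!: arg_cong[where f="restrict_space borel"])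
  then have "u \<in> borel_measurable (restrict_space borel (T \<times> T))"
    using measurable_restrict_space1[OF u, of "T \<times> T"] by simp
  then show "u \<in> borel_measurable \<gamma>"
    unfolding measurable_cong_sets[OF sub_plans_D(1)[OF g] refl] .
  show "(\<lambda>x. u (x, s)) \<in> borel_measurable \<mu>"
    using measurable_compose[OF meas_left_mu u] by simp
  show "(\<lambda>y. u (s, y)) \<in> borel_measurable \<nu>"
    using measurable_compose[OF meas_right_nu u] by simp
qed

lemma hat_nn_integral:
  assumes g: "\<gamma> \<in> sub_plans T \<mu> \<nu>" and h: "h \<in> borel_measurable (restrict_space borel (insert s T \<times> insert s T))"
  shows "(\<integral>\<^sup>+z. h z \<partial>hat_plan T s \<mu> \<nu> \<gamma>) = (\<integral>\<^sup>+z. h z \<partial>\<gamma>)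
     + (\<integral>\<^sup>+x. (1 - RN_deriv \<mu> (marg1 T \<gamma>) x) * h (x, s) \<partial>\<mu>)
     + (\<integral>\<^sup>+y. (1 - RN_deriv \<nu> (marg2 T \<gamma>) y) * h (s, y) \<partial>\<nu>)
     + emeasure \<gamma> (T \<times> T) * h (s, s)"
proof -
  let ?H = "hat_plan T s \<mu> \<nu> \<gamma>"
  let ?M = "restrict_space borel (insert s T \<times> insert s T)"
  let ?f1 = "RN_deriv \<mu> (marg1 T \<gamma>)" and ?f2 = "RN_deriv \<nu> (marg2 T \<gamma>)"
  let ?m = "emeasure \<gamma> (T \<times> T)"
  note f1m[measurable] = marg1_facts(2)[OF g] and f2m[measurable] = marg2_facts(2)[OF g]
  have mH: "measurable ?H = measurable ?M" by (intro ext measurable_cong_sets[OF sets_hat refl])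
  have hH: "h \<in> borel_measurable ?H" using h unfolding mH .
  have spg: "space \<gamma> = T \<times> T" by (rule sub_plans_D(2)[OF g])
  note mt = meas_transfer[OF g, unfolded mH[symmetric]]
  from hH show ?thesis
  proof (induction rule: borel_measurable_induct)
    case (cong f g')
    have eq: "f z = g' z" if "z \<in> insert s T \<times> insert s T" for z using cong(3) that by (simp add: space_hat)
    have "(\<integral>\<^sup>+z. f z \<partial>?H) = (\<integral>\<^sup>+z. g' z \<partial>?H)" by (intro nn_integral_cong) (simp add: space_hat eq)
    moreover have "(\<integral>\<^sup>+z. f z \<partial>\<gamma>) = (\<integral>\<^sup>+z. g' z \<partial>\<gamma>)" by (intro nn_integral_cong) (auto simp: spg eq)
    moreover have "(\<integral>\<^sup>+x. (1 - ?f1 x) * f (x, s) \<partial>\<mu>) = (\<integral>\<^sup>+x. (1 - ?f1 x) * g' (x, s) \<partial>\<mu>)"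
      by (intro nn_integral_cong) (auto simp: eq)
    moreover have "(\<integral>\<^sup>+x. (1 - ?f2 x) * f (s, x) \<partial>\<nu>) = (\<integral>\<^sup>+x. (1 - ?f2 x) * g' (s, x) \<partial>\<nu>)"
      by (intro nn_integral_cong) (auto simp: eq)
    moreover have "f (s, s) = g' (s, s)" by (simp add: eq)
    ultimately show ?case using cong(4) by simp
  next
    case (set A)
    have AM: "A \<in> sets ?M" using set sets_hat by simp
    have "(\<integral>\<^sup>+z. indicator A z \<partial>?H) = emeasure ?H A" using set by simp
    also have "\<dots> = F \<gamma> A" by (rule hat_emeasure[OF g AM])
    also have "emeasure \<gamma> (A \<inter> (T \<times> T)) = (\<integral>\<^sup>+z. indicator A z \<partial>\<gamma>)"
    proof -
      have "A \<inter> space \<gamma> \<in> sets \<gamma>" using sets_MSS_TT[OF AM] sub_plans_D(1)[OF g] spg by simp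
      then show ?thesis using spg by (simp add: nn_integral_indicator')
    qed
    finally show ?case by simp
  next
    case (mult u c)
    note [measurable] = mt[OF mult(2)]
    have "(\<integral>\<^sup>+z. c * u z \<partial>?H) = c * (\<integral>\<^sup>+z. u z \<partial>?H)" using mult(2) by (simp add: nn_integral_cmult)
    moreover have "(\<integral>\<^sup>+z. c * u z \<partial>\<gamma>) = c * (\<integral>\<^sup>+z. u z \<partial>\<gamma>)" by (simp add: nn_integral_cmult)
    moreover have "(\<integral>\<^sup>+x. (1 - ?f1 x) * (c * u (x, s)) \<partial>\<mu>) = c * (\<integral>\<^sup>+x. (1 - ?f1 x) * u (x, s) \<partial>\<mu>)"
      by (subst nn_integral_cmult[symmetric]) (auto simp: mult_ac)
    moreover have "(\<integral>\<^sup>+x. (1 - ?f2 x) * (c * u (s, x)) \<partial>\<nu>) = c * (\<integral>\<^sup>+x. (1 - ?f2 x) * u (s, x) \<partial>\<nu>)"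
      by (subst nn_integral_cmult[symmetric]) (auto simp: mult_ac)
    ultimately show ?case using mult(4) by (simp add: distrib_left mult_ac)
  next
    case (add u v)
    have um: "u \<in> borel_measurable ?H" "v \<in> borel_measurable ?H" using add by blast+
    note [measurable] = mt[OF um(1)] mt[OF um(2)]
    have "(\<integral>\<^sup>+z. v z + u z \<partial>?H) = (\<integral>\<^sup>+z. v z \<partial>?H) + (\<integral>\<^sup>+z. u z \<partial>?H)"
      using um by (simp add: nn_integral_add)
    moreover have "(\<integral>\<^sup>+z. v z + u z \<partial>\<gamma>) = (\<integral>\<^sup>+z. v z \<partial>\<gamma>) + (\<integral>\<^sup>+z. u z \<partial>\<gamma>)"
      by (simp add: nn_integral_add)
    moreover have "(\<integral>\<^sup>+x. (1 - ?f1 x) * (v (x, s) + u (x, s)) \<partial>\<mu>) =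
        (\<integral>\<^sup>+x. (1 - ?f1 x) * v (x, s) \<partial>\<mu>) + (\<integral>\<^sup>+x. (1 - ?f1 x) * u (x, s) \<partial>\<mu>)"
      by (simp add: distrib_left nn_integral_add)
    moreover have "(\<integral>\<^sup>+x. (1 - ?f2 x) * (v (s, x) + u (s, x)) \<partial>\<nu>) =
        (\<integral>\<^sup>+x. (1 - ?f2 x) * v (s, x) \<partial>\<nu>) + (\<integral>\<^sup>+x. (1 - ?f2 x) * u (s, x) \<partial>\<nu>)"
      by (simp add: distrib_left nn_integral_add)
    ultimately show ?case using add by (simp add: distrib_left algebra_simps)
  next
    case (seq U)
    have incU: "incseq U" using seq by blast
    note [measurable] = mt[OF seq(1)]
    have inc: "U i z \<le> U j z" if "i \<le> j" for i j z
      using incU that unfolding incseq_def le_fun_def by blast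
    have supeq: "(SUP i. U i) z = (SUP i. U i z)" for z by (simp add: image_comp)
    have "(\<integral>\<^sup>+z. (SUP i. U i z) \<partial>?H) = (SUP i. (\<integral>\<^sup>+z. U i z \<partial>?H))"
      using seq(1) incU by (simp add: nn_integral_monotone_convergence_SUP)
    also have "\<dots> = (SUP i. (\<integral>\<^sup>+z. U i z \<partial>\<gamma>)
     + (\<integral>\<^sup>+x. (1 - ?f1 x) * U i (x, s) \<partial>\<mu>)
     + (\<integral>\<^sup>+y. (1 - ?f2 y) * U i (s, y) \<partial>\<nu>)
     + ?m * U i (s, s))" using seq.IH by simp
    also have "\<dots> = (SUP i. (\<integral>\<^sup>+z. U i z \<partial>\<gamma>))
     + (SUP i. (\<integral>\<^sup>+x. (1 - ?f1 x) * U i (x, s) \<partial>\<mu>))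
     + (SUP i. (\<integral>\<^sup>+y. (1 - ?f2 y) * U i (s, y) \<partial>\<nu>))
     + (SUP i. ?m * U i (s, s))"
      by (intro SUP_add4) (auto simp: incseq_def intro!: nn_integral_mono mult_left_mono inc)
    also have "(SUP i. (\<integral>\<^sup>+z. U i z \<partial>\<gamma>)) = (\<integral>\<^sup>+z. (SUP i. U i z) \<partial>\<gamma>)"
      by (simp add: nn_integral_monotone_convergence_SUP[symmetric] incU)
    also have "(SUP i. (\<integral>\<^sup>+x. (1 - ?f1 x) * U i (x, s) \<partial>\<mu>)) = (\<integral>\<^sup>+x. (1 - ?f1 x) * (SUP i. U i (x, s)) \<partial>\<mu>)"
      by (subst nn_integral_monotone_convergence_SUP[symmetric])
         (auto simp: incseq_def le_fun_def SUP_mult_left_ennreal intro!: mult_left_mono inc)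
    also have "(SUP i. (\<integral>\<^sup>+x. (1 - ?f2 x) * U i (s, x) \<partial>\<nu>)) = (\<integral>\<^sup>+x. (1 - ?f2 x) * (SUP i. U i (s, x)) \<partial>\<nu>)"
      by (subst nn_integral_monotone_convergence_SUP[symmetric])
         (auto simp: incseq_def le_fun_def SUP_mult_left_ennreal intro!: mult_left_mono inc)
    also have "(SUP i. ?m * U i (s, s)) = ?m * (SUP i. U i (s, s))"
      by (simp add: SUP_mult_left_ennreal)
    finally show ?case unfolding supeq .
  qed
qed

end

context ptset
begin

lemma sets_MS_T: "A \<in> sets (restrict_space borel (insert s T)) \<Longrightarrow>
   A \<inter> T \<in> sets (restrict_space borel T)"
  unfolding sets_restrict_space by auto

lemma sets_hat_meas: "sets (hat_meas T s M1 M2) = sets (restrict_space borel (insert s T))"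
proof -
  let ?M = "restrict_space borel (insert s T)"
  have sub: "sets ?M \<subseteq> Pow (insert s T)"
    using sets.space_closed[of ?M] unfolding space_MS .
  have "sets (hat_meas T s M1 M2) = sigma_sets (insert s T) (sets ?M)"
    unfolding hat_meas_def by (rule sets_measure_of[OF sub])
  also have "\<dots> = sets ?M" using sets.sigma_sets_eq[of ?M] unfolding space_MS .
  finally show ?thesis .
qed

lemma emeasure_hat_meas:
  assumes M1: "sets M1 = sets (restrict_space borel T)"
    and A: "A \<in> sets (restrict_space borel (insert s T))"
  shows "emeasure (hat_meas T s M1 M2) A = emeasure M1 (A \<inter> T) + emeasure M2 T * indicator A s"
  unfolding hat_meas_def
proof (rule emeasure_measure_of_sigma[OF _ _ _ A])
  let ?M = "restrict_space borel (insert s T)"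
  let ?F = "\<lambda>A. emeasure M1 (A \<inter> T) + emeasure M2 T * indicator A s"
  show "sigma_algebra (insert s T) (sets ?M)"
    using sets.sigma_algebra_axioms[of ?M] space_MS by simp
  show "positive (sets ?M) ?F" by (simp add: positive_def)
  show "countably_additive (sets ?M) ?F"
    unfolding countably_additive_def
  proof (intro allI impI)
    fix B :: "nat \<Rightarrow> _" assume B: "range B \<subseteq> sets ?M" "disjoint_family B" "\<Union> (range B) \<in> sets ?M"
    have Bi: "B i \<in> sets ?M" for i using B(1) by auto
    have a: "(\<Sum>i. emeasure M1 (B i \<inter> T)) = emeasure M1 ((\<Union> (range B)) \<inter> T)"
    proof -
      have "(\<Sum>i. emeasure M1 (B i \<inter> T)) = emeasure M1 (\<Union>i. B i \<inter> T)"
      proof (rule suminf_emeasure)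
        show "range (\<lambda>i. B i \<inter> T) \<subseteq> sets M1"
          using sets_MS_T[OF Bi] M1 by auto
        show "disjoint_family (\<lambda>i. B i \<inter> T)"
          using B(2) by (auto simp: disjoint_family_on_def)
      qed
      then show ?thesis by simp
    qed
    have d: "(\<Sum>i. emeasure M2 T * indicator (B i) s) = emeasure M2 T * indicator (\<Union> (range B)) s"
      using suminf_indicator[OF B(2)] by simp
    show "(\<Sum>i. ?F (B i)) = ?F (\<Union> (range B))"
      by (simp only: suminf_add[symmetric, OF summable_enn summable_enn] a d)
  qed
qed

lemma meas_fst_S: "fst \<in> measurable (restrict_space borel (insert s T \<times> insert s T)) (restrict_space borel (insert s T))"
proof (rule measurable_restrict_space2)
  show "fst \<in> space (restrict_space borel (insert s T \<times> insert s T)) \<rightarrow> insert s T"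
    unfolding space_MSS by auto
  show "fst \<in> borel_measurable (restrict_space borel (insert s T \<times> insert s T))"
    by (intro measurable_restrict_space1) (auto intro!: borel_measurable_continuous_onI continuous_intros)
qed
lemma meas_snd_S: "snd \<in> measurable (restrict_space borel (insert s T \<times> insert s T)) (restrict_space borel (insert s T))"
proof (rule measurable_restrict_space2)
  show "snd \<in> space (restrict_space borel (insert s T \<times> insert s T)) \<rightarrow> insert s T"
    unfolding space_MSS by auto
  show "snd \<in> borel_measurable (restrict_space borel (insert s T \<times> insert s T))"
    by (intro measurable_restrict_space1) (auto intro!: borel_measurable_continuous_onI continuous_intros)
qed

lemma hat_in_couplings:
  assumes g: "\<gamma> \<in> sub_plans T \<mu> \<nu>"
  shows "hat_plan T s \<mu> \<nu> \<gamma> \<in> couplings (insert s T) (hat_meas T s \<mu> \<nu>) (hat_meas T s \<nu> \<mu>)"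
proof -
  let ?H = "hat_plan T s \<mu> \<nu> \<gamma>"
  let ?MS = "restrict_space borel (insert s T)"
  let ?MSS = "restrict_space borel (insert s T \<times> insert s T)"
  let ?f1 = "RN_deriv \<mu> (marg1 T \<gamma>)" and ?f2 = "RN_deriv \<nu> (marg2 T \<gamma>)"
  let ?m = "emeasure \<gamma> (T \<times> T)"
  note f1 = marg1_facts[OF g] and f2 = marg2_facts[OF g]
  note [measurable] = f1(2) f2(2)
  have fstH: "fst \<in> measurable ?H ?MS" unfolding measurable_cong_sets[OF sets_hat refl] by (rule meas_fst_S)
  have sndH: "snd \<in> measurable ?H ?MS" unfolding measurable_cong_sets[OF sets_hat refl] by (rule meas_snd_S)
  have Tmu: "T \<in> sets \<mu>" using sets_mu by (metis sets.top space_MT)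
  have Tnu: "T \<in> sets \<nu>" using sets_nu by (metis sets.top space_MT)
  note [measurable] = Tmu Tnu
  have TMT: "T \<in> sets (restrict_space borel T)" by (metis sets.top space_MT)
  have c1: "(\<integral>\<^sup>+x. (1 - ?f1 x) * indicator B x \<partial>\<mu>) + emeasure \<gamma> (B \<times> T) = emeasure \<mu> B"
    if "B \<in> sets (restrict_space borel T)" for B
    using compl_gen[OF fin_mu f1(1) f1(2) f1(3), of B] that sets_mu marg1_eq[OF g that] by simp
  have c2: "(\<integral>\<^sup>+x. (1 - ?f2 x) * indicator B x \<partial>\<nu>) + emeasure \<gamma> (T \<times> B) = emeasure \<nu> B"
    if "B \<in> sets (restrict_space borel T)" for B
    using compl_gen[OF fin_nu f2(1) f2(2) f2(3), of B] that sets_nu marg2_eq[OF g that] by simp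
  have ind1: "(\<integral>\<^sup>+x. (1 - ?f1 x) \<partial>\<mu>) = (\<integral>\<^sup>+x. (1 - ?f1 x) * indicator T x \<partial>\<mu>)"
    by (intro nn_integral_cong) (simp add: space_mu)
  have ind2: "(\<integral>\<^sup>+x. (1 - ?f2 x) \<partial>\<nu>) = (\<integral>\<^sup>+x. (1 - ?f2 x) * indicator T x \<partial>\<nu>)"
    by (intro nn_integral_cong) (simp add: space_nu)
  have m1: "distr ?H ?MS fst = hat_meas T s \<mu> \<nu>"
  proof (rule measure_eqI)
    show "sets (distr ?H ?MS fst) = sets (hat_meas T s \<mu> \<nu>)" by (simp add: sets_hat_meas)
    fix A assume "A \<in> sets (distr ?H ?MS fst)"
    then have A: "A \<in> sets ?MS" by simp
    have AS: "A \<subseteq> insert s T" using sets.sets_into_space[OF A] space_MS by simp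
    have pre: "fst -` A \<inter> space ?H = A \<times> insert s T" using AS by (auto simp: space_hat)
    have AST: "A \<times> insert s T \<in> sets ?MSS"
      using measurable_sets[OF fstH A] pre sets_hat by simp
    have AT: "A \<inter> T \<in> sets (restrict_space borel T)" by (rule sets_MS_T[OF A])
    have "emeasure (distr ?H ?MS fst) A = emeasure ?H (A \<times> insert s T)"
      using fstH A pre by (simp add: emeasure_distr)
    also have "\<dots> = F \<gamma> (A \<times> insert s T)" by (rule hat_emeasure[OF g AST])
    also have "\<dots> = emeasure \<gamma> ((A \<inter> T) \<times> T) + (\<integral>\<^sup>+x. (1 - ?f1 x) * indicator (A \<inter> T) x \<partial>\<mu>)
       + indicator A s * ((\<integral>\<^sup>+y. (1 - ?f2 y) * indicator T y \<partial>\<nu>) + ?m)"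
    proof -
      have "(A \<times> insert s T) \<inter> (T \<times> T) = (A \<inter> T) \<times> T" by auto
      moreover have "(\<integral>\<^sup>+x. (1 - ?f1 x) * indicator (A \<times> insert s T) (x, s) \<partial>\<mu>) = (\<integral>\<^sup>+x. (1 - ?f1 x) * indicator (A \<inter> T) x \<partial>\<mu>)"
        by (intro nn_integral_cong) (auto simp: space_mu split: split_indicator)
      moreover have "(\<integral>\<^sup>+y. (1 - ?f2 y) * indicator (A \<times> insert s T) (s, y) \<partial>\<nu>) = indicator A s * (\<integral>\<^sup>+y. (1 - ?f2 y) * indicator T y \<partial>\<nu>)"
        by (subst nn_integral_cmult[symmetric]) (auto intro!: nn_integral_cong simp: space_nu split: split_indicator)
      moreover have "indicator (A \<times> insert s T) (s, s) = (indicator A s :: ennreal)"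
        "indicator (insert s T \<times> A) (s, s) = (indicator A s :: ennreal)" by (simp_all add: indicator_def)
      ultimately show ?thesis by (simp add: distrib_left mult_ac add_ac)
    qed
    also have "\<dots> = emeasure \<mu> (A \<inter> T) + indicator A s * emeasure \<nu> T"
      using c1[OF AT] c2[OF TMT] by (simp add: add_ac)
    also have "\<dots> = emeasure (hat_meas T s \<mu> \<nu>) A"
      using emeasure_hat_meas[OF sets_mu A] by (simp add: mult_ac)
    finally show "emeasure (distr ?H ?MS fst) A = emeasure (hat_meas T s \<mu> \<nu>) A" .
  qed
  have m2: "distr ?H ?MS snd = hat_meas T s \<nu> \<mu>"
  proof (rule measure_eqI)
    show "sets (distr ?H ?MS snd) = sets (hat_meas T s \<nu> \<mu>)" by (simp add: sets_hat_meas)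
    fix A assume "A \<in> sets (distr ?H ?MS snd)"
    then have A: "A \<in> sets ?MS" by simp
    have AS: "A \<subseteq> insert s T" using sets.sets_into_space[OF A] space_MS by simp
    have pre: "snd -` A \<inter> space ?H = insert s T \<times> A" using AS by (auto simp: space_hat)
    have AST: "insert s T \<times> A \<in> sets ?MSS"
      using measurable_sets[OF sndH A] pre sets_hat by simp
    have AT: "A \<inter> T \<in> sets (restrict_space borel T)" by (rule sets_MS_T[OF A])
    have "emeasure (distr ?H ?MS snd) A = emeasure ?H (insert s T \<times> A)"
      using sndH A pre by (simp add: emeasure_distr)
    also have "\<dots> = F \<gamma> (insert s T \<times> A)" by (rule hat_emeasure[OF g AST])
    also have "\<dots> = emeasure \<gamma> (T \<times> (A \<inter> T)) + (\<integral>\<^sup>+x. (1 - ?f2 x) * indicator (A \<inter> T) x \<partial>\<nu>)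
       + indicator A s * ((\<integral>\<^sup>+y. (1 - ?f1 y) * indicator T y \<partial>\<mu>) + ?m)"
    proof -
      have "(insert s T \<times> A) \<inter> (T \<times> T) = T \<times> (A \<inter> T)" by auto
      moreover have "(\<integral>\<^sup>+x. (1 - ?f2 x) * indicator (insert s T \<times> A) (s, x) \<partial>\<nu>) = (\<integral>\<^sup>+x. (1 - ?f2 x) * indicator (A \<inter> T) x \<partial>\<nu>)"
        by (intro nn_integral_cong) (auto simp: space_nu split: split_indicator)
      moreover have "(\<integral>\<^sup>+y. (1 - ?f1 y) * indicator (insert s T \<times> A) (y, s) \<partial>\<mu>) = indicator A s * (\<integral>\<^sup>+y. (1 - ?f1 y) * indicator T y \<partial>\<mu>)"
        by (subst nn_integral_cmult[symmetric]) (auto intro!: nn_integral_cong simp: space_mu split: split_indicator)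
      moreover have "indicator (A \<times> insert s T) (s, s) = (indicator A s :: ennreal)"
        "indicator (insert s T \<times> A) (s, s) = (indicator A s :: ennreal)" by (simp_all add: indicator_def)
      ultimately show ?thesis by (simp add: distrib_left mult_ac add_ac)
    qed
    also have "\<dots> = emeasure \<nu> (A \<inter> T) + indicator A s * emeasure \<mu> T"
      using c2[OF AT] c1[OF TMT] by (simp add: add_ac)
    also have "\<dots> = emeasure (hat_meas T s \<nu> \<mu>) A"
      using emeasure_hat_meas[OF sets_nu A] by (simp add: mult_ac)
    finally show "emeasure (distr ?H ?MS snd) A = emeasure (hat_meas T s \<nu> \<mu>) A" .
  qed
  show ?thesis unfolding couplings_def using m1 m2 sets_hat by simp
qed

end

context ptset
begin

lemma sets_MT_MS: assumes "A \<in> sets (restrict_space borel T)" shows "A \<in> sets (restrict_space borel (insert s T))"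
proof -
  obtain B where B: "B \<in> sets borel" "A = T \<inter> B" using assms unfolding sets_restrict_space by auto
  then have "A = insert s T \<inter> (T \<inter> B)" "T \<inter> B \<in> sets borel" using T_borel by auto
  then show ?thesis unfolding sets_restrict_space by blast
qed

lemma sets_MTT_MSS: "A \<in> sets (restrict_space borel (T \<times> T)) \<Longrightarrow> A \<in> sets (restrict_space borel (insert s T \<times> insert s T))"
  unfolding sets_restrict_space image_iff
  by (elim bexE) (rule bexI[of _ "(T \<times> T) \<inter> _"], auto simp: TT_borel)

lemma hat_inj:
  assumes g1: "\<gamma>1 \<in> sub_plans T \<mu> \<nu>" and g2: "\<gamma>2 \<in> sub_plans T \<mu> \<nu>"
    and eq: "hat_plan T s \<mu> \<nu> \<gamma>1 = hat_plan T s \<mu> \<nu> \<gamma>2"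
  shows "\<gamma>1 = \<gamma>2"
proof (rule measure_eqI)
  show "sets \<gamma>1 = sets \<gamma>2" using sub_plans_D(1)[OF g1] sub_plans_D(1)[OF g2] by simp
  fix A assume "A \<in> sets \<gamma>1"
  then have A: "A \<in> sets (restrict_space borel (T \<times> T))" using sub_plans_D(1)[OF g1] by simp
  have AT: "A \<subseteq> T \<times> T" using sets.sets_into_space[OF A] by simp
  have AS: "A \<in> sets (restrict_space borel (insert s T \<times> insert s T))" by (rule sets_MTT_MSS[OF A])
  have z: "indicator A (x, s) = (0::ennreal)" "indicator A (s, x) = (0::ennreal)" for x
    using AT sT by (auto simp: indicator_def)
  have "emeasure (hat_plan T s \<mu> \<nu> \<gamma>) A = emeasure \<gamma> A" if g: "\<gamma> \<in> sub_plans T \<mu> \<nu>" for \<gamma>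
    using hat_emeasure[OF g AS] AT z by (simp add: Int_absorb2)
  from this[OF g1] this[OF g2] eq show "emeasure \<gamma>1 A = emeasure \<gamma>2 A" by simp
qed

lemma couplings_D:
  assumes g: "g \<in> couplings (insert s T) (hat_meas T s \<mu> \<nu>) (hat_meas T s \<nu> \<mu>)"
  shows "sets g = sets (restrict_space borel (insert s T \<times> insert s T))"
    "space g = insert s T \<times> insert s T"
    "distr g (restrict_space borel (insert s T)) fst = hat_meas T s \<mu> \<nu>"
    "distr g (restrict_space borel (insert s T)) snd = hat_meas T s \<nu> \<mu>"
proof -
  show s: "sets g = sets (restrict_space borel (insert s T \<times> insert s T))"
    using g unfolding couplings_def by blast
  show "space g = insert s T \<times> insert s T" using sets_eq_imp_space_eq[OF s] space_MSS by simp
  show "distr g (restrict_space borel (insert s T)) fst = hat_meas T s \<mu> \<nu>"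
    "distr g (restrict_space borel (insert s T)) snd = hat_meas T s \<nu> \<mu>"
    using g unfolding couplings_def by blast+
qed

lemma couplings_fst:
  assumes g: "g \<in> couplings (insert s T) (hat_meas T s \<mu> \<nu>) (hat_meas T s \<nu> \<mu>)"
    and B: "B \<in> sets (restrict_space borel (insert s T))"
  shows "emeasure g (B \<times> insert s T) = emeasure \<mu> (B \<inter> T) + emeasure \<nu> T * indicator B s"
proof -
  note cd = couplings_D[OF g]
  have fg: "fst \<in> measurable g (restrict_space borel (insert s T))"
    unfolding measurable_cong_sets[OF cd(1) refl] by (rule meas_fst_S)
  have BS: "B \<subseteq> insert s T" using sets.sets_into_space[OF B] space_MS by simp
  have "emeasure g (B \<times> insert s T) = emeasure (distr g (restrict_space borel (insert s T)) fst) B"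
    using fg B BS cd(2) by (subst emeasure_distr) (auto intro!: arg_cong[where f="emeasure g"])
  also have "\<dots> = emeasure \<mu> (B \<inter> T) + emeasure \<nu> T * indicator B s"
    unfolding cd(3) by (rule emeasure_hat_meas[OF sets_mu B])
  finally show ?thesis .
qed

lemma couplings_snd:
  assumes g: "g \<in> couplings (insert s T) (hat_meas T s \<mu> \<nu>) (hat_meas T s \<nu> \<mu>)"
    and B: "B \<in> sets (restrict_space borel (insert s T))"
  shows "emeasure g (insert s T \<times> B) = emeasure \<nu> (B \<inter> T) + emeasure \<mu> T * indicator B s"
proof -
  note cd = couplings_D[OF g]
  have fg: "snd \<in> measurable g (restrict_space borel (insert s T))"
    unfolding measurable_cong_sets[OF cd(1) refl] by (rule meas_snd_S)
  have BS: "B \<subseteq> insert s T" using sets.sets_into_space[OF B] space_MS by simp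
  have "emeasure g (insert s T \<times> B) = emeasure (distr g (restrict_space borel (insert s T)) snd) B"
    using fg B BS cd(2) by (subst emeasure_distr) (auto intro!: arg_cong[where f="emeasure g"])
  also have "\<dots> = emeasure \<nu> (B \<inter> T) + emeasure \<mu> T * indicator B s"
    unfolding cd(4) by (rule emeasure_hat_meas[OF sets_nu B])
  finally show ?thesis .
qed

lemma couplings_finite:
  assumes g: "g \<in> couplings (insert s T) (hat_meas T s \<mu> \<nu>) (hat_meas T s \<nu> \<mu>)"
  shows "finite_measure g"
proof -
  note cd = couplings_D[OF g]
  have Sms: "insert s T \<in> sets (restrict_space borel (insert s T))" by (metis sets.top space_MS)
  have "emeasure g (space g) = emeasure \<mu> (insert s T \<inter> T) + emeasure \<nu> T * indicator (insert s T) s"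
    using couplings_fst[OF g Sms] cd(2) by simp
  also have "\<dots> \<noteq> \<infinity>" using mu_fin nu_fin by (simp add: ennreal_mult_eq_top_iff)
  finally show ?thesis by (rule finite_measureI)
qed


lemma RR: "restrict_space (restrict_space borel (insert s T \<times> insert s T)) (T \<times> T) = restrict_space borel (T \<times> T)"
  using SS_borel TT_borel by (subst restrict_restrict_space) (auto intro!: arg_cong[where f="restrict_space borel"])

lemma times_MSS:
  assumes B: "B \<in> sets (restrict_space borel (insert s T))" and C: "C \<in> sets (restrict_space borel (insert s T))"
  shows "B \<times> C \<in> sets (restrict_space borel (insert s T \<times> insert s T))"
proof -
  have BS: "B \<subseteq> insert s T" using sets.sets_into_space[OF B] space_MS by simp
  have CS: "C \<subseteq> insert s T" using sets.sets_into_space[OF C] space_MS by simp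
  have "B \<times> C = (fst -` B \<inter> space (restrict_space borel (insert s T \<times> insert s T))) \<inter>
      (snd -` C \<inter> space (restrict_space borel (insert s T \<times> insert s T)))"
    using BS CS unfolding space_MSS by auto
  then show ?thesis using measurable_sets[OF meas_fst_S B] measurable_sets[OF meas_snd_S C] by auto
qed

lemma s_MS: "{s} \<in> sets (restrict_space borel (insert s T))"
proof -
  have "{s} = insert s T \<inter> {s}" by auto
  then show ?thesis unfolding sets_restrict_space using borel_closed[OF closed_singleton[of s]] by blast
qed

lemma S_MS: "insert s T \<in> sets (restrict_space borel (insert s T))"
  by (metis sets.top space_MS)

lemma T_MS: "T \<in> sets (restrict_space borel (insert s T))"
  using sets_MT_MS[of T] by (metis sets.top space_MT)

lemma marg1_eq_gen: assumes sg: "sets \<gamma> = sets (restrict_space borel (T \<times> T))" and A: "A \<in> sets (restrict_space borel T)"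
  shows "emeasure (marg1 T \<gamma>) A = emeasure \<gamma> (A \<times> T)"
proof -
  have sp: "space \<gamma> = T \<times> T" using sets_eq_imp_space_eq[OF sg] by simp
  have m: "fst \<in> measurable \<gamma> (restrict_space borel T)"
    unfolding measurable_cong_sets[OF sg refl] by (rule meas_fst)
  have "A \<subseteq> T" using sets.sets_into_space[OF A] by simp
  then have "fst -` A \<inter> space \<gamma> = A \<times> T" using sp by auto
  then show ?thesis unfolding marg1_def using m A by (simp add: emeasure_distr)
qed

lemma marg2_eq_gen: assumes sg: "sets \<gamma> = sets (restrict_space borel (T \<times> T))" and A: "A \<in> sets (restrict_space borel T)"
  shows "emeasure (marg2 T \<gamma>) A = emeasure \<gamma> (T \<times> A)"
proof -
  have sp: "space \<gamma> = T \<times> T" using sets_eq_imp_space_eq[OF sg] by simp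
  have m: "snd \<in> measurable \<gamma> (restrict_space borel T)"
    unfolding measurable_cong_sets[OF sg refl] by (rule meas_snd)
  have "A \<subseteq> T" using sets.sets_into_space[OF A] by simp
  then have "snd -` A \<inter> space \<gamma> = T \<times> A" using sp by auto
  then show ?thesis unfolding marg2_def using m A by (simp add: emeasure_distr)
qed

lemma couplings_restrict:
  assumes g: "g \<in> couplings (insert s T) (hat_meas T s \<mu> \<nu>) (hat_meas T s \<nu> \<mu>)"
  shows "restrict_space g (T \<times> T) \<in> sub_plans T \<mu> \<nu>"
    "hat_plan T s \<mu> \<nu> (restrict_space g (T \<times> T)) = g"
proof -
  define \<gamma> where "\<gamma> = restrict_space g (T \<times> T)"
  let ?MS = "restrict_space borel (insert s T)"
  let ?MSS = "restrict_space borel (insert s T \<times> insert s T)"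
  note cd = couplings_D[OF g]
  have TTg: "T \<times> T \<in> sets g"
    using cd(1) sets_MTT_MSS[of "T \<times> T"] by (metis sets.top space_MTT)
  have "T \<times> T \<inter> space g = T \<times> T" using cd(2) by auto
  then have TTg': "T \<times> T \<inter> space g \<in> sets g" using TTg by simp
  have sg: "sets \<gamma> = sets (restrict_space borel (T \<times> T))"
    unfolding \<gamma>_def using sets_restrict_space_cong[OF cd(1), of "T \<times> T"] RR by simp
  have fing: "finite_measure g" by (rule couplings_finite[OF g])
  have fin: "finite_measure \<gamma>" unfolding \<gamma>_def by (rule finite_measure_restrict_space[OF fing TTg])
  have gfin: "emeasure g X \<noteq> \<infinity>" for X using finite_measure.emeasure_finite[OF fing] by simp
  have eqg: "emeasure \<gamma> B = emeasure g B" if "B \<subseteq> T \<times> T" for B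
    unfolding \<gamma>_def using emeasure_restrict_space[OF TTg' that] .
  have BS: "B \<in> sets ?MS" if "B \<in> sets (restrict_space borel T)" for B using sets_MT_MS[OF that] .
  have BT: "B \<subseteq> T" if "B \<in> sets (restrict_space borel T)" for B using sets.sets_into_space[OF that] by simp
  have sBT: "s \<notin> B" if "B \<in> sets (restrict_space borel T)" for B using BT[OF that] sT by auto
  have m1: "emeasure (marg1 T \<gamma>) A \<le> emeasure \<mu> A" if A: "A \<in> sets \<mu>" for A
  proof -
    have A': "A \<in> sets (restrict_space borel T)" using A sets_mu by simp
    have "emeasure (marg1 T \<gamma>) A = emeasure g (A \<times> T)"
      using marg1_eq_gen[OF sg A'] eqg[of "A \<times> T"] BT[OF A'] by auto
    also have "\<dots> \<le> emeasure g (A \<times> insert s T)"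
    proof (rule emeasure_mono)
      show "A \<times> insert s T \<in> sets g" using times_MSS[OF BS[OF A'] S_MS] cd(1) by simp
    qed auto
    also have "\<dots> = emeasure \<mu> A"
      using couplings_fst[OF g BS[OF A']] BT[OF A'] sBT[OF A'] by (simp add: Int_absorb2)
    finally show ?thesis .
  qed
  have m2: "emeasure (marg2 T \<gamma>) A \<le> emeasure \<nu> A" if A: "A \<in> sets \<nu>" for A
  proof -
    have A': "A \<in> sets (restrict_space borel T)" using A sets_nu by simp
    have "emeasure (marg2 T \<gamma>) A = emeasure g (T \<times> A)"
      using marg2_eq_gen[OF sg A'] eqg[of "T \<times> A"] BT[OF A'] by auto
    also have "\<dots> \<le> emeasure g (insert s T \<times> A)"
    proof (rule emeasure_mono)
      show "insert s T \<times> A \<in> sets g" using times_MSS[OF S_MS BS[OF A']] cd(1) by simp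
    qed auto
    also have "\<dots> = emeasure \<nu> A"
      using couplings_snd[OF g BS[OF A']] BT[OF A'] sBT[OF A'] by (simp add: Int_absorb2)
    finally show ?thesis .
  qed
  have sp: "\<gamma> \<in> sub_plans T \<mu> \<nu>"
    unfolding sub_plans_def using sg fin m1 m2 sets_mu sets_nu by auto
  then show "restrict_space g (T \<times> T) \<in> sub_plans T \<mu> \<nu>" unfolding \<gamma>_def .
  let ?f1 = "RN_deriv \<mu> (marg1 T \<gamma>)" and ?f2 = "RN_deriv \<nu> (marg2 T \<gamma>)"
  note f1 = marg1_facts[OF sp] and f2 = marg2_facts[OF sp]
  have gB: "B \<times> C \<in> sets g" if "B \<in> sets ?MS" "C \<in> sets ?MS" for B C
    using times_MSS[OF that] cd(1) by simp
  have piece1: "emeasure g (B \<times> {s}) = (\<integral>\<^sup>+x. (1 - ?f1 x) * indicator B x \<partial>\<mu>)"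
    if B: "B \<in> sets (restrict_space borel T)" for B
  proof -
    have "emeasure g (B \<times> T) + emeasure g (B \<times> {s}) = emeasure g (B \<times> T \<union> B \<times> {s})"
      using gB[OF BS[OF B] T_MS] gB[OF BS[OF B] s_MS] sT by (intro plus_emeasure) auto
    also have "B \<times> T \<union> B \<times> {s} = B \<times> insert s T" by auto
    also have "emeasure g \<dots> = emeasure \<mu> B"
      using couplings_fst[OF g BS[OF B]] BT[OF B] sBT[OF B] by (simp add: Int_absorb2)
    also have "\<dots> = (\<integral>\<^sup>+x. (1 - ?f1 x) * indicator B x \<partial>\<mu>) + emeasure (marg1 T \<gamma>) B"
      using compl_gen[OF fin_mu f1(1) f1(2) f1(3), of B] B sets_mu by simp
    also have "emeasure (marg1 T \<gamma>) B = emeasure g (B \<times> T)"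
      using marg1_eq_gen[OF sg B] eqg[of "B \<times> T"] BT[OF B] by auto
    finally show ?thesis using gfin[of "B \<times> T"] by (simp add: ennreal_add_left_cancel add.commute)
  qed
  have piece2: "emeasure g ({s} \<times> B) = (\<integral>\<^sup>+x. (1 - ?f2 x) * indicator B x \<partial>\<nu>)"
    if B: "B \<in> sets (restrict_space borel T)" for B
  proof -
    have "emeasure g (T \<times> B) + emeasure g ({s} \<times> B) = emeasure g (T \<times> B \<union> {s} \<times> B)"
      using gB[OF T_MS BS[OF B]] gB[OF s_MS BS[OF B]] sT by (intro plus_emeasure) auto
    also have "T \<times> B \<union> {s} \<times> B = insert s T \<times> B" by auto
    also have "emeasure g \<dots> = emeasure \<nu> B"
      using couplings_snd[OF g BS[OF B]] BT[OF B] sBT[OF B] by (simp add: Int_absorb2)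
    also have "\<dots> = (\<integral>\<^sup>+x. (1 - ?f2 x) * indicator B x \<partial>\<nu>) + emeasure (marg2 T \<gamma>) B"
      using compl_gen[OF fin_nu f2(1) f2(2) f2(3), of B] B sets_nu by simp
    also have "emeasure (marg2 T \<gamma>) B = emeasure g (T \<times> B)"
      using marg2_eq_gen[OF sg B] eqg[of "T \<times> B"] BT[OF B] by auto
    finally show ?thesis using gfin[of "T \<times> B"] by (simp add: ennreal_add_left_cancel add.commute)
  qed
  have TMT: "T \<in> sets (restrict_space borel T)" by (metis sets.top space_MT)
  have piece3: "emeasure g {(s, s)} = emeasure \<gamma> (T \<times> T)"
  proof -
    have "emeasure g (T \<times> {s}) + emeasure g ({s} \<times> {s}) = emeasure g (T \<times> {s} \<union> {s} \<times> {s})"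
      using gB[OF T_MS s_MS] gB[OF s_MS s_MS] sT by (intro plus_emeasure) auto
    also have "T \<times> {s} \<union> {s} \<times> {s} = insert s T \<times> {s}" by auto
    also have "emeasure g \<dots> = emeasure \<mu> T"
      using couplings_snd[OF g s_MS] sT by simp
    also have "\<dots> = (\<integral>\<^sup>+x. (1 - ?f1 x) * indicator T x \<partial>\<mu>) + emeasure (marg1 T \<gamma>) T"
      using compl_gen[OF fin_mu f1(1) f1(2) f1(3), of T] TMT sets_mu by simp
    also have "(\<integral>\<^sup>+x. (1 - ?f1 x) * indicator T x \<partial>\<mu>) = emeasure g (T \<times> {s})"
      using piece1[OF TMT] by simp
    also have "emeasure (marg1 T \<gamma>) T = emeasure \<gamma> (T \<times> T)"
      using marg1_eq_gen[OF sg TMT] by simp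
    finally show ?thesis using gfin[of "T \<times> {s}"] by (simp add: ennreal_add_left_cancel)
  qed
  show "hat_plan T s \<mu> \<nu> (restrict_space g (T \<times> T)) = g"
    unfolding \<gamma>_def[symmetric]
  proof (rule measure_eqI)
    show "sets (hat_plan T s \<mu> \<nu> \<gamma>) = sets g" using sets_hat cd(1) by simp
    fix A assume "A \<in> sets (hat_plan T s \<mu> \<nu> \<gamma>)"
    then have A: "A \<in> sets ?MSS" using sets_hat by simp
    have AS: "A \<subseteq> insert s T \<times> insert s T" using sets.sets_into_space[OF A] space_MSS by simp
    define A1 where "A1 = (\<lambda>x. (x, s)) -` A \<inter> space (restrict_space borel T)"
    define A2 where "A2 = (\<lambda>y. (s, y)) -` A \<inter> space (restrict_space borel T)"
    have A1: "A1 \<in> sets (restrict_space borel T)" unfolding A1_def by (rule measurable_sets[OF meas_left A])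
    have A2: "A2 \<in> sets (restrict_space borel T)" unfolding A2_def by (rule measurable_sets[OF meas_right A])
    have Ag: "A \<in> sets g" using A cd(1) by simp
    have ATT: "A \<inter> (T \<times> T) \<in> sets g" using Ag TTg by auto
    have Ass: "A \<inter> {(s, s)} \<in> sets g" using Ag gB[OF s_MS s_MS] by auto
    have decomp: "A = (((A \<inter> (T \<times> T)) \<union> A1 \<times> {s}) \<union> {s} \<times> A2) \<union> (A \<inter> {(s, s)})"
      using AS unfolding A1_def A2_def by auto
    have "emeasure g A = emeasure g (((A \<inter> (T \<times> T)) \<union> A1 \<times> {s}) \<union> {s} \<times> A2) + emeasure g (A \<inter> {(s, s)})"
      using ATT gB[OF BS[OF A1] s_MS] gB[OF s_MS BS[OF A2]] Ass sT
      by (subst decomp, intro plus_emeasure[symmetric]) (auto simp: A1_def A2_def)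
    also have "emeasure g (((A \<inter> (T \<times> T)) \<union> A1 \<times> {s}) \<union> {s} \<times> A2) =
        emeasure g (A \<inter> (T \<times> T)) + emeasure g (A1 \<times> {s}) + emeasure g ({s} \<times> A2)"
    proof -
      have e1: "emeasure g (A \<inter> (T \<times> T)) + emeasure g (A1 \<times> {s}) = emeasure g ((A \<inter> (T \<times> T)) \<union> A1 \<times> {s})"
        using ATT gB[OF BS[OF A1] s_MS] sT by (intro plus_emeasure) (auto simp: A1_def)
      have e2: "emeasure g ((A \<inter> (T \<times> T)) \<union> A1 \<times> {s}) + emeasure g ({s} \<times> A2) = emeasure g (((A \<inter> (T \<times> T)) \<union> A1 \<times> {s}) \<union> {s} \<times> A2)"
        using ATT gB[OF BS[OF A1] s_MS] gB[OF s_MS BS[OF A2]] sT by (intro plus_emeasure) (auto simp: A1_def A2_def)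
      show ?thesis using e1 e2 by simp
    qed
    also have "emeasure g (A \<inter> {(s, s)}) = emeasure \<gamma> (T \<times> T) * indicator A (s, s)"
      using piece3 by (cases "(s, s) \<in> A") (auto simp: Int_absorb1)
    also have "emeasure g (A1 \<times> {s}) = (\<integral>\<^sup>+x. (1 - ?f1 x) * indicator A (x, s) \<partial>\<mu>)"
      using piece1[OF A1] by (auto intro!: nn_integral_cong simp: A1_def indicator_def)
    also have "emeasure g ({s} \<times> A2) = (\<integral>\<^sup>+y. (1 - ?f2 y) * indicator A (s, y) \<partial>\<nu>)"
      using piece2[OF A2] by (auto intro!: nn_integral_cong simp: A2_def indicator_def)
    also have "emeasure g (A \<inter> (T \<times> T)) = emeasure \<gamma> (A \<inter> (T \<times> T))"
      using eqg by simp
    finally show "emeasure (hat_plan T s \<mu> \<nu> \<gamma>) A = emeasure g A"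
      using hat_emeasure[OF sp A] by simp
  qed
qed

end

context ptset
begin

lemma ext_meas_T:
  fixes w :: "'a \<Rightarrow> real"
  assumes w: "w \<in> borel_measurable (restrict_space borel T)"
  shows "(\<lambda>x. if x \<in> T then w x else 0) \<in> borel_measurable borel"
proof -
  have "(\<lambda>x. indicator T x *\<^sub>R w x) \<in> borel_measurable borel"
    using borel_measurable_restrict_space_iff[of T borel w] T_borel w by simp
  moreover have "(\<lambda>x. indicator T x *\<^sub>R w x) = (\<lambda>x. if x \<in> T then w x else 0)"
    by (auto simp: indicator_def)
  ultimately show ?thesis by simp
qed

lemma ext_meas_TT:
  fixes c :: "'a \<Rightarrow> 'a \<Rightarrow> real"
  assumes c: "continuous_on (T \<times> T) (\<lambda>z. c (fst z) (snd z))"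
  shows "(\<lambda>z. if z \<in> T \<times> T then c (fst z) (snd z) else 0) \<in> borel_measurable borel"
proof -
  have w: "(\<lambda>z. c (fst z) (snd z)) \<in> borel_measurable (restrict_space borel (T \<times> T))"
    by (rule borel_measurable_continuous_on_restrict[OF c])
  have "(\<lambda>z. indicator (T \<times> T) z *\<^sub>R c (fst z) (snd z)) \<in> borel_measurable borel"
    using borel_measurable_restrict_space_iff[of "T \<times> T" borel "\<lambda>z. c (fst z) (snd z)"] TT_borel w by simp
  moreover have "(\<lambda>z. indicator (T \<times> T) z *\<^sub>R c (fst z) (snd z)) = (\<lambda>z. if z \<in> T \<times> T then c (fst z) (snd z) else 0)"
    by (auto simp: indicator_def)
  ultimately show ?thesis by simp
qed

lemma hat_c_meas:
  assumes c: "continuous_on (T \<times> T) (\<lambda>z. c (fst z) (snd z))"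
    and w1: "w1 \<in> borel_measurable (restrict_space borel T)"
    and w2: "w2 \<in> borel_measurable (restrict_space borel T)"
  shows "(\<lambda>z. hat_c b c lam w1 w2 s (fst z) (snd z)) \<in> borel_measurable (restrict_space borel (insert s T \<times> insert s T))"
proof -
  let ?w1 = "\<lambda>x. if x \<in> T then w1 x else 0" and ?w2 = "\<lambda>x. if x \<in> T then w2 x else 0"
  let ?c = "\<lambda>z. if z \<in> T \<times> T then c (fst z) (snd z) else 0"
  let ?h = "\<lambda>z. if fst z = s \<and> snd z = s then 0 else if snd z = s then ?w1 (fst z)
     else if fst z = s then ?w2 (snd z) else b * (?c z - lam)"
  have m1[measurable]: "?w1 \<in> borel_measurable borel" by (rule ext_meas_T[OF w1])
  have m2[measurable]: "?w2 \<in> borel_measurable borel" by (rule ext_meas_T[OF w2])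
  have m3[measurable]: "?c \<in> borel_measurable borel" by (rule ext_meas_TT[OF c])
  have p1: "{z \<in> space borel. fst z = s} \<in> sets (borel :: ('a \<times> 'a) measure)"
    by (rule borel_closed) (auto intro!: closed_Collect_eq continuous_intros)
  have p2: "{z \<in> space borel. snd z = s} \<in> sets (borel :: ('a \<times> 'a) measure)"
    by (rule borel_closed) (auto intro!: closed_Collect_eq continuous_intros)
  have p3: "{z \<in> space borel. fst z = s \<and> snd z = s} \<in> sets (borel :: ('a \<times> 'a) measure)"
    by (rule borel_closed) (auto intro!: closed_Collect_conj closed_Collect_eq continuous_intros)
  have mf: "(\<lambda>z. ?w1 (fst z)) \<in> borel_measurable borel" "(\<lambda>z. ?w2 (snd z)) \<in> borel_measurable borel"
    by (rule measurable_compose[OF _ m1], rule borel_measurable_continuous_onI, intro continuous_intros)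
       (rule measurable_compose[OF _ m2], rule borel_measurable_continuous_onI, intro continuous_intros)
  have mc: "(\<lambda>z. b * (?c z - lam)) \<in> borel_measurable borel" by measurable
  have "?h \<in> borel_measurable borel"
    apply (rule measurable_If[OF _ _ p3])
      apply simp
     apply (rule measurable_If[OF mf(1) _ p2])
    apply (rule measurable_If[OF mf(2) mc p1])
    done
  then have hm: "?h \<in> borel_measurable (restrict_space borel (insert s T \<times> insert s T))"
    by (rule measurable_restrict_space1)
  have eq: "hat_c b c lam w1 w2 s (fst z) (snd z) = ?h z"
    if z: "z \<in> space (restrict_space borel (insert s T \<times> insert s T))" for z
  proof -
    obtain x y where xy: "z = (x, y)" "x \<in> insert s T" "y \<in> insert s T" using z space_MSS by auto
    show ?thesis
    proof (cases "x = s")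
      case True then show ?thesis using xy sT by (cases "y = s") (simp_all add: hat_c_def)
    next
      case False then show ?thesis using xy sT by (cases "y = s") (simp_all add: hat_c_def)
    qed
  qed
  show ?thesis by (subst measurable_cong[OF eq]) (assumption, rule hm)
qed

end

context ptset
begin

lemma ereal_arith_aux:
  fixes W1 W2 :: ennreal and b p n :: real
  assumes "0 \<le> b" "0 \<le> p" "0 \<le> n"
  shows "enn2ereal (ennreal b * ennreal p + W1 + W2 + 0) - enn2ereal (ennreal b * ennreal n + 0 + 0 + 0)
    = enn2ereal W1 + enn2ereal W2 + ereal b * (enn2ereal (ennreal p) - enn2ereal (ennreal n))"
  using assms
  by (cases W1 rule: ennreal_cases; cases W2 rule: ennreal_cases)
     (simp_all add: plus_ennreal.rep_eq times_ennreal.rep_eq enn2ereal_ennreal algebra_simps)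

lemma cost_eq:
  assumes g: "\<gamma> \<in> sub_plans T \<mu> \<nu>" and b: "b \<ge> 0"
    and c: "continuous_on (T \<times> T) (\<lambda>z. c (fst z) (snd z))"
    and w1p: "\<forall>x\<in>T. w1 x \<ge> 0" and w2p: "\<forall>x\<in>T. w2 x \<ge> 0"
    and w1: "w1 \<in> borel_measurable (restrict_space borel T)"
    and w2: "w2 \<in> borel_measurable (restrict_space borel T)"
  shows "KT_cost b c lam w1 w2 s (hat_plan T s \<mu> \<nu> \<gamma>) = ET_cost b c lam w1 w2 T \<mu> \<nu> \<gamma>"
proof -
  let ?H = "hat_plan T s \<mu> \<nu> \<gamma>"
  let ?hc = "\<lambda>z. hat_c b c lam w1 w2 s (fst z) (snd z)"
  let ?f1 = "RN_deriv \<mu> (marg1 T \<gamma>)" and ?f2 = "RN_deriv \<nu> (marg2 T \<gamma>)"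
  let ?m = "emeasure \<gamma> (T \<times> T)"
  note hcm[measurable] = hat_c_meas[OF c w1 w2, of b lam]
  have pm: "(\<lambda>z. ennreal (?hc z)) \<in> borel_measurable (restrict_space borel (insert s T \<times> insert s T))"
    by measurable
  have nm: "(\<lambda>z. ennreal (- ?hc z)) \<in> borel_measurable (restrict_space borel (insert s T \<times> insert s T))"
    by measurable
  have spg: "space \<gamma> = T \<times> T" by (rule sub_plans_D(2)[OF g])
  have cm: "(\<lambda>z. c (fst z) (snd z)) \<in> borel_measurable \<gamma>"
    unfolding measurable_cong_sets[OF sub_plans_D(1)[OF g] refl]
    by (rule borel_measurable_continuous_on_restrict[OF c])
  note [measurable] = cm
  have hTT: "?hc z = b * (c (fst z) (snd z) - lam)" if "z \<in> T \<times> T" for z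
    using that sT by (auto simp: hat_c_def)
  have hl: "hat_c b c lam w1 w2 s x s = w1 x" if "x \<in> T" for x using that sT by (auto simp: hat_c_def)
  have hr: "hat_c b c lam w1 w2 s s y = w2 y" if "y \<in> T" for y using that sT by (auto simp: hat_c_def)
  have hss: "hat_c b c lam w1 w2 s s s = 0" by (simp add: hat_c_def)
  define Pc where "Pc = (\<integral>\<^sup>+z. ennreal (c (fst z) (snd z) - lam) \<partial>\<gamma>)"
  define Nc where "Nc = (\<integral>\<^sup>+z. ennreal (- (c (fst z) (snd z) - lam)) \<partial>\<gamma>)"
  define W1 where "W1 = (\<integral>\<^sup>+x. ennreal (w1 x) * (1 - ?f1 x) \<partial>\<mu>)"
  define W2 where "W2 = (\<integral>\<^sup>+y. ennreal (w2 y) * (1 - ?f2 y) \<partial>\<nu>)"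
  have IP: "(\<integral>\<^sup>+z. ennreal (?hc z) \<partial>?H) = ennreal b * Pc + W1 + W2 + 0"
  proof -
    have "(\<integral>\<^sup>+z. ennreal (?hc z) \<partial>\<gamma>) = (\<integral>\<^sup>+z. ennreal b * ennreal (c (fst z) (snd z) - lam) \<partial>\<gamma>)"
      by (intro nn_integral_cong) (simp add: spg hTT ennreal_mult'[OF b])
    also have "\<dots> = ennreal b * Pc" unfolding Pc_def by (simp add: nn_integral_cmult)
    finally have 1: "(\<integral>\<^sup>+z. ennreal (?hc z) \<partial>\<gamma>) = ennreal b * Pc" .
    have 2: "(\<integral>\<^sup>+x. (1 - ?f1 x) * ennreal (?hc (x, s)) \<partial>\<mu>) = W1"
      unfolding W1_def by (intro nn_integral_cong) (simp add: hl mult.commute)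
    have 3: "(\<integral>\<^sup>+x. (1 - ?f2 x) * ennreal (?hc (s, x)) \<partial>\<nu>) = W2"
      unfolding W2_def by (intro nn_integral_cong) (simp add: hr mult.commute)
    show ?thesis using hat_nn_integral[OF g pm] 1 2 3 hss by simp
  qed
  have IN: "(\<integral>\<^sup>+z. ennreal (- ?hc z) \<partial>?H) = ennreal b * Nc + 0 + 0 + 0"
  proof -
    have "(\<integral>\<^sup>+z. ennreal (- ?hc z) \<partial>\<gamma>) = (\<integral>\<^sup>+z. ennreal b * ennreal (- (c (fst z) (snd z) - lam)) \<partial>\<gamma>)"
      by (intro nn_integral_cong) (simp add: spg hTT ennreal_mult'[OF b, symmetric] algebra_simps)
    also have "\<dots> = ennreal b * Nc" unfolding Nc_def by (simp add: nn_integral_cmult)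
    finally have 1: "(\<integral>\<^sup>+z. ennreal (- ?hc z) \<partial>\<gamma>) = ennreal b * Nc" .
    have 2: "(\<integral>\<^sup>+x. (1 - ?f1 x) * ennreal (- ?hc (x, s)) \<partial>\<mu>) = 0"
    proof -
      have "(\<integral>\<^sup>+x. (1 - ?f1 x) * ennreal (- ?hc (x, s)) \<partial>\<mu>) = (\<integral>\<^sup>+x. 0 \<partial>\<mu>)"
        using w1p by (intro nn_integral_cong) (simp add: hl ennreal_neg)
      then show ?thesis by simp
    qed
    have 3: "(\<integral>\<^sup>+x. (1 - ?f2 x) * ennreal (- ?hc (s, x)) \<partial>\<nu>) = 0"
    proof -
      have "(\<integral>\<^sup>+x. (1 - ?f2 x) * ennreal (- ?hc (s, x)) \<partial>\<nu>) = (\<integral>\<^sup>+x. 0 \<partial>\<nu>)"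
        using w2p by (intro nn_integral_cong) (simp add: hr ennreal_neg)
      then show ?thesis by simp
    qed
    show ?thesis using hat_nn_integral[OF g nm] 1 2 3 hss by simp
  qed
  obtain B where B: "\<And>z. z \<in> T \<times> T \<Longrightarrow> \<bar>c (fst z) (snd z)\<bar> \<le> B"
  proof -
    have "compact ((\<lambda>z. c (fst z) (snd z)) ` (T \<times> T))"
      by (rule compact_continuous_image[OF c compact_Times[OF cT cT]])
    then obtain B where "\<forall>x\<in>(\<lambda>z. c (fst z) (snd z)) ` (T \<times> T). norm x \<le> B"
      using compact_imp_bounded bounded_iff by metis
    then have "\<bar>c (fst z) (snd z)\<bar> \<le> B" if "z \<in> T \<times> T" for z using that by auto
    then show ?thesis using that by blast
  qed
  have gfin: "emeasure \<gamma> (space \<gamma>) \<noteq> \<infinity>" using sub_plans_D(4)[OF g] .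
  have bnd: "(\<integral>\<^sup>+z. ennreal (f z) \<partial>\<gamma>) < \<infinity>"
    if f: "\<And>z. z \<in> T \<times> T \<Longrightarrow> f z \<le> B + \<bar>lam\<bar>" for f :: "_ \<Rightarrow> real"
  proof -
    have "(\<integral>\<^sup>+z. ennreal (f z) \<partial>\<gamma>) \<le> (\<integral>\<^sup>+z. ennreal (B + \<bar>lam\<bar>) \<partial>\<gamma>)"
      by (intro nn_integral_mono ennreal_leI) (simp add: spg f)
    also have "\<dots> = ennreal (B + \<bar>lam\<bar>) * emeasure \<gamma> (space \<gamma>)" by simp
    also have "\<dots> < \<infinity>" using gfin by (simp add: ennreal_mult_less_top less_top)
    finally show ?thesis .
  qed
  have "Pc < \<infinity>" unfolding Pc_def
    by (rule bnd) (use B in \<open>fastforce simp: abs_le_iff\<close>)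
  then obtain p where p: "Pc = ennreal p" "0 \<le> p" by (cases Pc rule: ennreal_cases) auto
  have "Nc < \<infinity>" unfolding Nc_def
    by (rule bnd) (use B in \<open>fastforce simp: abs_le_iff\<close>)
  then obtain n where n: "Nc = ennreal n" "0 \<le> n" by (cases Nc rule: ennreal_cases) auto
  have ET: "ET_cost b c lam w1 w2 T \<mu> \<nu> \<gamma> = enn2ereal W1 + enn2ereal W2 + ereal b * (enn2ereal Pc - enn2ereal Nc)"
    unfolding ET_cost_def ext_integral_def W1_def W2_def Pc_def Nc_def by simp
  have KT: "KT_cost b c lam w1 w2 s ?H = enn2ereal (ennreal b * Pc + W1 + W2 + 0) - enn2ereal (ennreal b * Nc + 0 + 0 + 0)"
    unfolding KT_cost_def ext_integral_def IP[symmetric] IN[symmetric] ..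
  show ?thesis unfolding ET KT p n by (rule ereal_arith_aux[OF b p(2) n(2)])
qed

end

theorem proposition3p3:
  fixes T :: "'a::{metric_space, second_countable_topology} set"
    and s :: 'a
    and c :: "'a \<Rightarrow> 'a \<Rightarrow> real"
    and w1 w2 :: "'a \<Rightarrow> real"
    and b lam :: real
    and \<mu> \<nu> :: "'a measure"
  assumes tree: "is_tree T"
    and s_notin: "s \<notin> T"
    and b_nonneg: "b \<ge> 0"
    and c_cont: "continuous_on (T \<times> T) (\<lambda>z. c (fst z) (snd z))"
    and c_diag: "\<forall>x\<in>T. c x x = 0"
    and w1_nonneg: "\<forall>x\<in>T. w1 x \<ge> 0" and w2_nonneg: "\<forall>x\<in>T. w2 x \<ge> 0"
    and w1_meas: "w1 \<in> borel_measurable (restrict_space borel T)"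
    and w2_meas: "w2 \<in> borel_measurable (restrict_space borel T)"
    and \<mu>: "\<mu> \<in> fin_measures T" and \<nu>: "\<nu> \<in> fin_measures T"
  shows "ET b c lam w1 w2 T \<mu> \<nu> = KT b c lam w1 w2 T s \<mu> \<nu>
    \<and> bij_betw (hat_plan T s \<mu> \<nu>) (ET_optimal b c lam w1 w2 T \<mu> \<nu>) (KT_optimal b c lam w1 w2 T s \<mu> \<nu>)"
proof -
  have cT: "compact T" using tree by (simp add: is_tree_def)
  interpret P: ptset T s \<mu> \<nu>
    by (rule ptset.intro) (fact cT, fact s_notin, fact \<mu>, fact \<nu>)
  let ?\<Phi> = "hat_plan T s \<mu> \<nu>"
  let ?SP = "sub_plans T \<mu> \<nu>"
  let ?CP = "couplings (insert s T) (hat_meas T s \<mu> \<nu>) (hat_meas T s \<nu> \<mu>)"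
  have img: "?\<Phi> ` ?SP = ?CP"
  proof
    show "?\<Phi> ` ?SP \<subseteq> ?CP" using P.hat_in_couplings by blast
    show "?CP \<subseteq> ?\<Phi> ` ?SP"
    proof
      fix g assume g: "g \<in> ?CP"
      show "g \<in> ?\<Phi> ` ?SP"
        using P.couplings_restrict[OF g] by (metis image_eqI)
    qed
  qed
  have inj: "inj_on ?\<Phi> ?SP" by (intro inj_onI) (rule P.hat_inj)
  have cost: "KT_cost b c lam w1 w2 s (?\<Phi> \<gamma>) = ET_cost b c lam w1 w2 T \<mu> \<nu> \<gamma>" if "\<gamma> \<in> ?SP" for \<gamma>
    by (rule P.cost_eq[OF that b_nonneg c_cont w1_nonneg w2_nonneg w1_meas w2_meas])
  have eq: "ET b c lam w1 w2 T \<mu> \<nu> = KT b c lam w1 w2 T s \<mu> \<nu>"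
  proof -
    have "ET b c lam w1 w2 T \<mu> \<nu> = (INF \<gamma>\<in>?SP. KT_cost b c lam w1 w2 s (?\<Phi> \<gamma>))"
      unfolding ET_def using cost by (intro INF_cong) auto
    also have "\<dots> = (INF g\<in>?\<Phi> ` ?SP. KT_cost b c lam w1 w2 s g)" by (simp add: image_comp)
    also have "\<dots> = KT b c lam w1 w2 T s \<mu> \<nu>" unfolding KT_def img ..
    finally show ?thesis .
  qed
  have "?\<Phi> ` ET_optimal b c lam w1 w2 T \<mu> \<nu> = KT_optimal b c lam w1 w2 T s \<mu> \<nu>"
  proof
    show "?\<Phi> ` ET_optimal b c lam w1 w2 T \<mu> \<nu> \<subseteq> KT_optimal b c lam w1 w2 T s \<mu> \<nu>"
      unfolding ET_optimal_def KT_optimal_def using img cost eq by auto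
    show "KT_optimal b c lam w1 w2 T s \<mu> \<nu> \<subseteq> ?\<Phi> ` ET_optimal b c lam w1 w2 T \<mu> \<nu>"
    proof
      fix g assume g: "g \<in> KT_optimal b c lam w1 w2 T s \<mu> \<nu>"
      then have gc: "g \<in> ?CP" and gk: "KT_cost b c lam w1 w2 s g = KT b c lam w1 w2 T s \<mu> \<nu>"
        unfolding KT_optimal_def by auto
      from gc img obtain \<gamma> where \<gamma>: "\<gamma> \<in> ?SP" "g = ?\<Phi> \<gamma>" by blast
      then have "\<gamma> \<in> ET_optimal b c lam w1 w2 T \<mu> \<nu>"
        unfolding ET_optimal_def using cost[OF \<gamma>(1)] gk eq by simp
      then show "g \<in> ?\<Phi> ` ET_optimal b c lam w1 w2 T \<mu> \<nu>" using \<gamma>(2) by blast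
    qed
  qed
  moreover have "inj_on ?\<Phi> (ET_optimal b c lam w1 w2 T \<mu> \<nu>)"
    using inj by (rule inj_on_subset) (auto simp: ET_optimal_def)
  ultimately show ?thesis using eq by (simp add: bij_betw_def)
qed

end
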